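(* Let $H_2$ be the graph with vertex set $\{0,1,2,3,4,5,u_1,u_2\}$ and edge set $\{01,03,04,05,12,13,14,15,23,24,25,34,45,\ 3u_1,4u_1,5u_1,\ 3u_2,4u_2,5u_2\}$, and for $r\ge 2$ let $H_r$ be obtained from $H_2$ by adding vertices $u_3,\dots,u_r$, each adjacent exactly to $3,4,5$ (so $N(u_k)=N(u_1)=\{3,4,5\}$ for all $k$). Then for $r\ge 2$, $\operatorname{Z}(H_r)=r+2$, $\underline{z_0}(H_r)=r+3$, and $z_0(H_r)=r+5$.
   Context: Zero forcing on a graph $G$: starting with a set $S$ of blue vertices (others white), a blue vertex $v$ may change a white vertex $w$ to blue if $w$ is the only white neighbor of $v$. $S$ is a zero forcing set if repeated application colors all of $V(G)$ blue. $\operatorname{Z}(G)$ is the minimum size of a zero forcing set. $\mathscr{Z}^{\rm TAR}(G)$ has vertices the zero forcing sets of $G$, two adjacent iff their symmetric difference has size 1; $\mathscr{Z}^{\rm TAR}_k(G)$ is its subgraph induced by zero forcing sets of size at most $k$. $\underline{z_0}(G)$ is the least $k$ with $\mathscr{Z}^{\rm TAR}_k(G)$ connected; $z_0(G)$ is the least $k$ such that $\mathscr{Z}^{\rm TAR}_i(G)$ is connected for every $i=k,\dots,|V(G)|$. *)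

theory Defs
  imports Main
begin

(* A simple graph is given by a vertex set V and an edge set E of 2-element sets. *)

inductive zf_blue :: "'a set \<Rightarrow> 'a set set \<Rightarrow> 'a set \<Rightarrow> 'a \<Rightarrow> bool"
  for V :: "'a set" and E :: "'a set set" and S :: "'a set" where
  init: "v \<in> S \<Longrightarrow> zf_blue V E S v"
| force: "\<lbrakk> u \<in> V; w \<in> V; zf_blue V E S u; {u, w} \<in> E;
            \<forall>x\<in>V. {u, x} \<in> E \<and> x \<noteq> w \<longrightarrow> zf_blue V E S x \<rbrakk>
          \<Longrightarrow> zf_blue V E S w"

definition zero_forcing_set :: "'a set \<Rightarrow> 'a set set \<Rightarrow> 'a set \<Rightarrow> bool" where
  "zero_forcing_set V E S \<longleftrightarrow> S \<subseteq> V \<and> (\<forall>v\<in>V. zf_blue V E S v)"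

definition zf_number :: "'a set \<Rightarrow> 'a set set \<Rightarrow> nat" where
  "zf_number V E = (LEAST k. \<exists>S. zero_forcing_set V E S \<and> card S = k)"

definition tar_vertices :: "'a set \<Rightarrow> 'a set set \<Rightarrow> nat \<Rightarrow> 'a set set" where
  "tar_vertices V E k = {S. zero_forcing_set V E S \<and> card S \<le> k}"

definition tar_adj :: "'a set \<Rightarrow> 'a set set \<Rightarrow> nat \<Rightarrow> 'a set \<Rightarrow> 'a set \<Rightarrow> bool" where
  "tar_adj V E k S T \<longleftrightarrow> S \<in> tar_vertices V E k \<and> T \<in> tar_vertices V E k
      \<and> card ((S - T) \<union> (T - S)) = 1"

definition tar_connected :: "'a set \<Rightarrow> 'a set set \<Rightarrow> nat \<Rightarrow> bool" where
  "tar_connected V E k \<longleftrightarrow> tar_vertices V E k \<noteq> {} \<and>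
     (\<forall>S\<in>tar_vertices V E k. \<forall>T\<in>tar_vertices V E k. (tar_adj V E k)\<^sup>*\<^sup>* S T)"

definition z0_lower :: "'a set \<Rightarrow> 'a set set \<Rightarrow> nat" where
  "z0_lower V E = (LEAST k. tar_connected V E k)"

definition z0 :: "'a set \<Rightarrow> 'a set set \<Rightarrow> nat" where
  "z0 V E = (LEAST k. \<forall>i. k \<le> i \<and> i \<le> card V \<longrightarrow> tar_connected V E i)"

(* The graph H_r: vertices 0..5 are 0..5, and u_k is encoded as the natural number 5 + k
   (k = 1..r). *)
definition H_vertices :: "nat \<Rightarrow> nat set" where
  "H_vertices r = {0..5} \<union> {5 + k | k. 1 \<le> k \<and> k \<le> r}"

definition H_edges :: "nat \<Rightarrow> nat set set" where
  "H_edges r = {{0,1},{0,3},{0,4},{0,5},{1,2},{1,3},{1,4},{1,5},{2,3},{2,4},{2,5},{3,4},{4,5}}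
     \<union> {{v, 5 + k} | v k. v \<in> {3,4,5} \<and> 1 \<le> k \<and> k \<le> r}"

end

theory Submission
  imports Defs
begin


lemma zf_mono: "zf_blue V E S v \<Longrightarrow> S \<subseteq> T \<Longrightarrow> zf_blue V E T v"
proof (induction rule: zf_blue.induct)
  case (init v) thus ?case by (auto intro: zf_blue.init)
next
  case (force u w)
  show ?case
  proof (rule zf_blue.force)
    show "\<forall>x\<in>V. {u, x} \<in> E \<and> x \<noteq> w \<longrightarrow> zf_blue V E T x" using force by blast
  qed (use force in auto)
qed

lemma zf_superset: "zero_forcing_set V E S \<Longrightarrow> S \<subseteq> T \<Longrightarrow> T \<subseteq> V \<Longrightarrow> zero_forcing_set V E T"
  unfolding zero_forcing_set_def by (auto intro: zf_mono[of V E S _ T])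

lemma zf_stall:
  assumes "S \<subseteq> T"
    and "\<And>u w. u \<in> T \<Longrightarrow> w \<in> V \<Longrightarrow> w \<notin> T \<Longrightarrow> {u,w} \<in> E \<Longrightarrow> \<exists>x\<in>V. x \<notin> T \<and> x \<noteq> w \<and> {u,x} \<in> E"
  shows "zf_blue V E S v \<Longrightarrow> v \<in> T"
proof (induction rule: zf_blue.induct)
  case (init v) thus ?case using assms(1) by auto
next
  case (force u w)
  show ?case
  proof (rule ccontr)
    assume "w \<notin> T"
    then obtain x where x: "x\<in>V" "x\<notin>T" "x\<noteq>w" "{u,x}\<in>E" using assms(2)[of u w] force.IH force.hyps by blast
    have "x \<in> T" using force.IH(2) x by blast
    with x show False by blast
  qed
qed

lemma not_zf_stall:
  assumes "S \<subseteq> T" "v \<in> V" "v \<notin> T"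
    and "\<And>u w. u \<in> T \<Longrightarrow> w \<in> V \<Longrightarrow> w \<notin> T \<Longrightarrow> {u,w} \<in> E \<Longrightarrow> \<exists>x\<in>V. x \<notin> T \<and> x \<noteq> w \<and> {u,x} \<in> E"
  shows "\<not> zero_forcing_set V E S"
  using zf_stall[of S T V E v, OF assms(1,4)] assms(2,3) unfolding zero_forcing_set_def by blast

lemma tar_adj_sym: "tar_adj V E k S T \<Longrightarrow> tar_adj V E k T S"
proof -
  have e: "(T - S) \<union> (S - T) = (S - T) \<union> (T - S)" by blast
  assume "tar_adj V E k S T" thus ?thesis unfolding tar_adj_def e by blast
qed

lemma tar_rt_sym: "(tar_adj V E k)\<^sup>*\<^sup>* S T \<Longrightarrow> (tar_adj V E k)\<^sup>*\<^sup>* T S"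
proof -
  have "symp (tar_adj V E k)" by (auto intro: sympI tar_adj_sym)
  thus "(tar_adj V E k)\<^sup>*\<^sup>* S T \<Longrightarrow> (tar_adj V E k)\<^sup>*\<^sup>* T S"
    by (rule sympD[OF symp_rtranclp])
qed

lemma tar_down_aux:
  assumes "finite D"
  shows "zero_forcing_set V E S \<Longrightarrow> finite S \<Longrightarrow> D \<subseteq> V \<Longrightarrow> D \<inter> S = {} \<Longrightarrow> card (S \<union> D) \<le> k
    \<Longrightarrow> (tar_adj V E k)\<^sup>*\<^sup>* (S \<union> D) S"
  using assms
proof (induction D rule: finite_induct)
  case empty thus ?case by simp
next
  case (insert x D)
  have SV: "S \<subseteq> V" using insert.prems unfolding zero_forcing_set_def by auto
  have z1: "zero_forcing_set V E (S \<union> insert x D)"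
    by (rule zf_superset[OF insert.prems(1)]) (use SV insert.prems in auto)
  have z2: "zero_forcing_set V E (S \<union> D)"
    by (rule zf_superset[OF insert.prems(1)]) (use SV insert.prems in auto)
  have c: "card (S \<union> D) \<le> card (S \<union> insert x D)"
    using insert by (intro card_mono) auto
  have sd: "((S \<union> insert x D) - (S \<union> D)) \<union> ((S \<union> D) - (S \<union> insert x D)) = {x}"
    using insert by auto
  have "tar_adj V E k (S \<union> insert x D) (S \<union> D)"
  proof -
    have "S \<union> insert x D \<in> tar_vertices V E k" unfolding tar_vertices_def using z1 insert.prems(5) by simp
    moreover have "S \<union> D \<in> tar_vertices V E k" unfolding tar_vertices_def using z2 c insert.prems(5) by simp
    moreover have "card (((S \<union> insert x D) - (S \<union> D)) \<union> ((S \<union> D) - (S \<union> insert x D))) = 1"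
      by (simp only: sd) simp
    ultimately show ?thesis unfolding tar_adj_def by blast
  qed
  moreover have "(tar_adj V E k)\<^sup>*\<^sup>* (S \<union> D) S"
    by (rule insert.IH) (use insert.prems insert.hyps c in auto)
  ultimately show ?case by (rule converse_rtranclp_into_rtranclp)
qed

lemma tar_conn_sub:
  assumes "zero_forcing_set V E S" "S \<subseteq> T" "T \<subseteq> V" "finite V" "card T \<le> k"
  shows "(tar_adj V E k)\<^sup>*\<^sup>* T S" "(tar_adj V E k)\<^sup>*\<^sup>* S T"
proof -
  have "T = S \<union> (T - S)" using assms by auto
  moreover have "(tar_adj V E k)\<^sup>*\<^sup>* (S \<union> (T - S)) S"
  proof (rule tar_down_aux)
    have fT: "finite T" using finite_subset[OF assms(3,4)] .
    show "finite (T - S)" using fT by simp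
    show "finite S" using finite_subset[OF assms(2) fT] .
    show "card (S \<union> (T - S)) \<le> k" using assms(2,5) by (simp add: Un_absorb1 Un_Diff_cancel)
  qed (use assms in auto)
  ultimately show "(tar_adj V E k)\<^sup>*\<^sup>* T S" by simp
  thus "(tar_adj V E k)\<^sup>*\<^sup>* S T" by (rule tar_rt_sym)
qed

lemma symdiff1_x: "card ((S - T) \<union> (T - S)) = 1 \<Longrightarrow> \<exists>x. \<forall>y. ((y \<in> S \<and> y \<notin> T) \<or> (y \<in> T \<and> y \<notin> S)) \<longleftrightarrow> y = x"
proof -
  assume c: "card ((S - T) \<union> (T - S)) = 1"
  then obtain x where x: "(S - T) \<union> (T - S) = {x}" by (auto simp: card_1_singleton_iff)
  have "\<forall>y. y \<in> (S - T) \<union> (T - S) \<longleftrightarrow> y \<in> {x}" using x by simp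
  hence "\<forall>y. ((y \<in> S \<and> y \<notin> T) \<or> (y \<in> T \<and> y \<notin> S)) \<longleftrightarrow> y = x" by simp
  thus ?thesis by (rule exI)
qed
lemma symdiff1_cases: "card ((S - T) \<union> (T - S)) = 1 \<Longrightarrow> (\<exists>x\<in>S. T = S - {x}) \<or> (\<exists>x. x \<notin> S \<and> T = insert x S)"
proof -
  assume c: "card ((S - T) \<union> (T - S)) = 1"
  then obtain x where x: "\<forall>y. ((y \<in> S \<and> y \<notin> T) \<or> (y \<in> T \<and> y \<notin> S)) \<longleftrightarrow> y = x" using symdiff1_x by blast
  show ?thesis
  proof (cases "x \<in> S")
    case True
    have "T = S - {x}"
    proof (rule set_eqI)
      fix y show "y \<in> T \<longleftrightarrow> y \<in> S - {x}" using x[rule_format, of y] True by auto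
    qed
    thus ?thesis using True by (intro disjI1 bexI)
  next
    case False
    have "T = insert x S"
    proof (rule set_eqI)
      fix y show "y \<in> T \<longleftrightarrow> y \<in> insert x S" using x[rule_format, of y] False by auto
    qed
    thus ?thesis using False by (intro disjI2 exI conjI)
  qed
qed
lemma symdiff1_card: "finite S \<Longrightarrow> finite T \<Longrightarrow> card ((S - T) \<union> (T - S)) = 1 \<Longrightarrow> card S \<noteq> card T"
proof -
  assume f: "finite S" "finite T" and c: "card ((S - T) \<union> (T - S)) = 1"
  from symdiff1_cases[OF c] show ?thesis
  proof
    assume "\<exists>x\<in>S. T = S - {x}"
    then obtain x where "x \<in> S" "T = S - {x}" by blast
    moreover have "card S > 0" using f \<open>x \<in> S\<close> card_gt_0_iff by blast
    ultimately show ?thesis using f by (simp add: card_Diff_singleton)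
  next
    assume "\<exists>x. x \<notin> S \<and> T = insert x S"
    then obtain x where "x \<notin> S" "T = insert x S" by blast
    thus ?thesis using f by simp
  qed
qed


definition hadj :: "nat \<Rightarrow> nat \<Rightarrow> nat \<Rightarrow> bool" where
 "hadj r a b \<longleftrightarrow> (a,b) \<in> {(0,1),(0,3),(0,4),(0,5),(1,2),(1,3),(1,4),(1,5),(2,3),(2,4),(2,5),(3,4),(4,5)}
    \<or> (b,a) \<in> {(0,1),(0,3),(0,4),(0,5),(1,2),(1,3),(1,4),(1,5),(2,3),(2,4),(2,5),(3,4),(4,5)}
    \<or> (a \<in> {3,4,5} \<and> 6 \<le> b \<and> b \<le> r+5) \<or> (b \<in> {3,4,5} \<and> 6 \<le> a \<and> a \<le> r+5)"

lemma HV: "H_vertices r = {0..r+5}"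
proof (rule set_eqI)
  fix x show "x \<in> H_vertices r \<longleftrightarrow> x \<in> {0..r+5}"
  proof
    assume "x \<in> H_vertices r" thus "x \<in> {0..r+5}" unfolding H_vertices_def by auto
  next
    assume x: "x \<in> {0..r+5}"
    show "x \<in> H_vertices r"
    proof (cases "x \<le> 5")
      case True thus ?thesis unfolding H_vertices_def by auto
    next
      case False
      hence "x = 5 + (x - 5) \<and> 1 \<le> x - 5 \<and> x - 5 \<le> r" using x by auto
      thus ?thesis unfolding H_vertices_def by blast
    qed
  qed
qed

lemma HE_bp: "(a,b) \<in> {(0,1),(0,3),(0,4),(0,5),(1,2),(1,3),(1,4),(1,5),(2,3),(2,4),(2,5),(3,4),(4,5)} \<Longrightarrow> {a,b} \<in> H_edges r"
proof -
  assume "(a,b) \<in> {(0,1),(0,3),(0,4),(0,5),(1,2),(1,3),(1,4),(1,5),(2,3),(2,4),(2,5),(3,4),(4,5)}"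
  hence "{a,b} \<in> {{0,1},{0,3},{0,4},{0,5},{1,2},{1,3},{1,4},{1,5},{2,3},{2,4},{2,5},{3,4},{4,5::nat}}"
    by (elim insertE emptyE; simp only: prod.inject; elim conjE; hypsubst; intro insertI1 insertI2)
  thus ?thesis unfolding H_edges_def by (rule UnI1)
qed

lemma HE_bu: "a \<in> {3,4,5} \<Longrightarrow> 6 \<le> b \<Longrightarrow> b \<le> r+5 \<Longrightarrow> {a,b} \<in> H_edges r"
proof -
  assume a: "a \<in> {3,4,5}" and b: "6 \<le> b" "b \<le> r+5"
  have e: "{a,b} = {a, 5 + (b-5)}" using b by simp
  have "\<exists>v k. {a,b} = {v, 5 + k} \<and> v \<in> {3,4,5} \<and> 1 \<le> k \<and> k \<le> r"
    by (rule exI[of _ a], rule exI[of _ "b-5"]) (intro conjI, rule e, use a in simp, use b in arith, use b in arith)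
  thus ?thesis unfolding H_edges_def by (intro UnI2 CollectI)
qed

lemma HE: "{a,b} \<in> H_edges r \<longleftrightarrow> hadj r a b"
proof
  assume m: "{a,b} \<in> H_edges r"
  from m[unfolded H_edges_def] show "hadj r a b"
  proof (rule UnE)
    assume "{a,b} \<in> {{0,1},{0,3},{0,4},{0,5},{1,2},{1,3},{1,4},{1,5},{2,3},{2,4},{2,5},{3,4},{4,5::nat}}"
    thus ?thesis unfolding hadj_def by (simp add: doubleton_eq_iff) (elim disjE; simp)
  next
    assume "{a,b} \<in> {{v, 5 + k} | v k. v \<in> {3,4,5} \<and> 1 \<le> k \<and> k \<le> r}"
    then obtain v k where e: "{a,b} = {v, 5+k}" and vk: "v \<in> {3,4,5}" "1 \<le> k" "k \<le> r" by blast
    from e have "(a = v \<and> b = 5+k) \<or> (a = 5+k \<and> b = v)" by (simp add: doubleton_eq_iff)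
    thus ?thesis using vk unfolding hadj_def by (elim disjE) auto
  qed
next
  assume h: "hadj r a b"
  hence "(a,b) \<in> {(0,1),(0,3),(0,4),(0,5),(1,2),(1,3),(1,4),(1,5),(2,3),(2,4),(2,5),(3,4),(4,5)}
    \<or> (b,a) \<in> {(0,1),(0,3),(0,4),(0,5),(1,2),(1,3),(1,4),(1,5),(2,3),(2,4),(2,5),(3,4),(4,5)}
    \<or> (a \<in> {3,4,5} \<and> 6 \<le> b \<and> b \<le> r+5) \<or> (b \<in> {3,4,5} \<and> 6 \<le> a \<and> a \<le> r+5)"
    unfolding hadj_def .
  thus "{a,b} \<in> H_edges r"
  proof (elim disjE conjE)
    assume "(a,b) \<in> {(0,1),(0,3),(0,4),(0,5),(1,2),(1,3),(1,4),(1,5),(2,3),(2,4),(2,5),(3,4),(4,5)}"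
    thus ?thesis by (rule HE_bp)
  next
    assume "(b,a) \<in> {(0,1),(0,3),(0,4),(0,5),(1,2),(1,3),(1,4),(1,5),(2,3),(2,4),(2,5),(3,4),(4,5)}"
    hence "{b,a} \<in> H_edges r" by (rule HE_bp)
    thus ?thesis by (simp only: insert_commute)
  next
    assume "a \<in> {3,4,5}" "6 \<le> b" "b \<le> r+5" thus ?thesis by (rule HE_bu)
  next
    assume "b \<in> {3,4,5}" "6 \<le> a" "a \<le> r+5"
    hence "{b,a} \<in> H_edges r" by (rule HE_bu)
    thus ?thesis by (simp only: insert_commute)
  qed
qed


lemma VE_mem: "x \<in> H_vertices r \<longleftrightarrow> x \<le> r + 5" by (simp add: HV)

context fixes r :: nat assumes r2: "2 \<le> r" begin

lemma posA:
  assumes a: "a \<in> {0,2}" and cd: "c \<in> {3,4,5}" "d \<in> {3,4,5}" "c \<noteq> d" and u: "6 \<le> u" "u \<le> r+5"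
    and sub: "{a,c,d} \<union> ({6..r+5} - {u}) \<subseteq> S" and SV: "S \<subseteq> H_vertices r"
  shows "zero_forcing_set (H_vertices r) (H_edges r) S"
proof -
  let ?B = "zf_blue (H_vertices r) (H_edges r) S"
  define u' where "u' = (if u = 6 then 7 else (6::nat))"
  have u': "6 \<le> u'" "u' \<le> r+5" "u' \<noteq> u" using r2 u unfolding u'_def by auto
  have init: "\<And>x. x \<in> S \<Longrightarrow> ?B x" by (rule zf_blue.init)
  have Ua: "\<And>x. 6 \<le> x \<Longrightarrow> x \<le> r+5 \<Longrightarrow> x \<noteq> u \<Longrightarrow> ?B x" using sub init by auto
  have Ba: "?B a" "?B c" "?B d" using sub init by auto
  have B345: "?B y" if y: "y \<in> {3,4,5}" for y
  proof (cases "y = c \<or> y = d")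
    case True thus ?thesis using Ba by auto
  next
    case False
    show ?thesis
    proof (rule zf_blue.force[of u'])
      show "u' \<in> H_vertices r" using u' by (simp add: VE_mem)
      show "y \<in> H_vertices r" using y by (auto simp: VE_mem)
      show "?B u'" using Ua u' by auto
      show "{u', y} \<in> H_edges r" using u' y by (auto simp: HE hadj_def)
      show "\<forall>x\<in>H_vertices r. {u', x} \<in> H_edges r \<and> x \<noteq> y \<longrightarrow> ?B x"
      proof (intro ballI impI)
        fix x assume "x \<in> H_vertices r" "{u',x} \<in> H_edges r \<and> x \<noteq> y"
        hence "x \<in> {3,4,5}" "x \<noteq> y" using u' by (auto simp: HE hadj_def)
        hence "x = c \<or> x = d" using False y cd by auto
        thus "?B x" using Ba by auto
      qed
    qed
  qed
  have B1: "?B 1"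
  proof (rule zf_blue.force[of a])
    show "a \<in> H_vertices r" using a by (auto simp: VE_mem)
    show "(1::nat) \<in> H_vertices r" by (auto simp: VE_mem)
    show "?B a" by (rule Ba)
    show "{a, 1} \<in> H_edges r" using a by (auto simp: HE hadj_def)
    show "\<forall>x\<in>H_vertices r. {a, x} \<in> H_edges r \<and> x \<noteq> 1 \<longrightarrow> ?B x"
    proof (intro ballI impI)
      fix x assume "x \<in> H_vertices r" "{a,x} \<in> H_edges r \<and> x \<noteq> 1"
      hence "x \<in> {3,4,5}" using a by (auto simp: HE hadj_def)
      thus "?B x" by (rule B345)
    qed
  qed
  have B02: "?B y" if y: "y \<in> {0,2}" for y
  proof (cases "y = a")
    case True thus ?thesis using Ba by auto
  next
    case False
    show ?thesis
    proof (rule zf_blue.force[of 1])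
      show "(1::nat) \<in> H_vertices r" by (auto simp: VE_mem)
      show "y \<in> H_vertices r" using y by (auto simp: VE_mem)
      show "?B 1" by (rule B1)
      show "{1, y} \<in> H_edges r" using y by (auto simp: HE hadj_def)
      show "\<forall>x\<in>H_vertices r. {1, x} \<in> H_edges r \<and> x \<noteq> y \<longrightarrow> ?B x"
      proof (intro ballI impI)
        fix x assume "x \<in> H_vertices r" "{1,x} \<in> H_edges r \<and> x \<noteq> y"
        hence "x \<in> {3,4,5} \<or> x = a" using a y False by (auto simp: HE hadj_def)
        thus "?B x" using B345 Ba by auto
      qed
    qed
  qed
  have Bu: "?B u"
  proof (rule zf_blue.force[of 4])
    show "(4::nat) \<in> H_vertices r" by (auto simp: VE_mem)
    show "u \<in> H_vertices r" using u by (auto simp: VE_mem)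
    show "?B 4" by (rule B345) simp
    show "{4, u} \<in> H_edges r" using u by (auto simp: HE hadj_def)
    show "\<forall>x\<in>H_vertices r. {4, x} \<in> H_edges r \<and> x \<noteq> u \<longrightarrow> ?B x"
    proof (intro ballI impI)
      fix x assume "x \<in> H_vertices r" "{4,x} \<in> H_edges r \<and> x \<noteq> u"
      hence "x \<in> {3,4,5} \<or> x \<in> {0,2} \<or> x = 1 \<or> (6 \<le> x \<and> x \<le> r+5 \<and> x \<noteq> u)" by (auto simp: HE hadj_def)
      thus "?B x" using B345 B02 B1 Ua by blast
    qed
  qed
  have "?B v" if v: "v \<in> H_vertices r" for v
  proof -
    have "v \<in> {3,4,5} \<or> v \<in> {0,2} \<or> v = 1 \<or> v = u \<or> (6 \<le> v \<and> v \<le> r+5 \<and> v \<noteq> u)" using v by (auto simp: VE_mem)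
    thus ?thesis using B345 B02 B1 Ua Bu by blast
  qed
  thus ?thesis unfolding zero_forcing_set_def using SV by blast
qed

end


lemma twin_H:
  assumes ab: "a \<le> r+5" "b \<le> r+5" "a \<noteq> b" and tw: "\<And>x. hadj r x a \<longleftrightarrow> hadj r x b"
    and z: "zero_forcing_set (H_vertices r) (H_edges r) S"
  shows "a \<in> S \<or> b \<in> S"
proof (rule ccontr)
  assume "\<not> ?thesis"
  hence sub: "S \<subseteq> H_vertices r - {a,b}" using z unfolding zero_forcing_set_def by auto
  have "\<not> zero_forcing_set (H_vertices r) (H_edges r) S"
  proof (rule not_zf_stall[OF sub, of a])
    show "a \<in> H_vertices r" using ab by (simp add: VE_mem)
    show "a \<notin> H_vertices r - {a,b}" by simp
    fix u w assume u: "u \<in> H_vertices r - {a,b}" and w: "w \<in> H_vertices r" "w \<notin> H_vertices r - {a,b}"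
      and uw: "{u,w} \<in> H_edges r"
    have "w = a \<or> w = b" using w by auto
    thus "\<exists>x\<in>H_vertices r. x \<notin> H_vertices r - {a,b} \<and> x \<noteq> w \<and> {u,x} \<in> H_edges r"
    proof
      assume "w = a"
      hence "{u,b} \<in> H_edges r" using uw tw by (simp add: HE)
      thus ?thesis using \<open>w = a\<close> ab by (intro bexI[of _ b]) (auto simp: VE_mem)
    next
      assume "w = b"
      hence "{u,a} \<in> H_edges r" using uw tw by (simp add: HE)
      thus ?thesis using \<open>w = b\<close> ab by (intro bexI[of _ a]) (auto simp: VE_mem)
    qed
  qed
  thus False using z by blast
qed

lemma twin02: "zero_forcing_set (H_vertices r) (H_edges r) S \<Longrightarrow> 0 \<in> S \<or> 2 \<in> S"
  by (rule twin_H) (auto simp: hadj_def)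

lemma twin35: "zero_forcing_set (H_vertices r) (H_edges r) S \<Longrightarrow> 3 \<in> S \<or> 5 \<in> S"
  by (rule twin_H) (auto simp: hadj_def)

lemma twinU: "zero_forcing_set (H_vertices r) (H_edges r) S \<Longrightarrow> 6 \<le> u1 \<Longrightarrow> u1 \<le> r+5 \<Longrightarrow> 6 \<le> u2 \<Longrightarrow> u2 \<le> r+5
   \<Longrightarrow> u1 \<noteq> u2 \<Longrightarrow> u1 \<in> S \<or> u2 \<in> S"
  by (rule twin_H) (auto simp: hadj_def)


lemma hadj_sym: "hadj r a b = hadj r b a" unfolding hadj_def by (simp only: disj_ac)
lemma adj_c_m: "c \<in> {3,5} \<Longrightarrow> m \<in> {0,1,2} \<or> (6 \<le> m \<and> m \<le> r+5) \<Longrightarrow> hadj r c m"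
  unfolding hadj_def by (elim disjE insertE emptyE) auto
lemma adj_u_4: "u \<in> {0,1,2} \<or> (6 \<le> u \<and> u \<le> r+5) \<Longrightarrow> hadj r u 4"
  unfolding hadj_def by (elim disjE insertE emptyE) auto
lemma adj_u_c: "c \<in> {3,5} \<Longrightarrow> u \<in> {0,1,2} \<or> (6 \<le> u \<and> u \<le> r+5) \<Longrightarrow> hadj r u c"
  unfolding hadj_def by (elim disjE insertE emptyE) auto
lemma adj_c_4: "c \<in> {3,5} \<Longrightarrow> hadj r c 4" unfolding hadj_def by (elim insertE emptyE) simp_all
lemma nadj35: "\<not> hadj r 3 5" "\<not> hadj r 5 3" unfolding hadj_def by simp_all


lemma negAC:
  assumes z: "zero_forcing_set (H_vertices r) (H_edges r) S"
    and cc: "(c = (3::nat) \<and> c' = 5) \<or> (c = 5 \<and> c' = (3::nat))"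
    and n4: "4 \<notin> S" and nc: "c' \<notin> S"
    and m: "m \<in> {0,1,2} \<or> (6 \<le> m \<and> m \<le> r+5)" and nm: "m \<notin> S"
  shows False
proof -
  let ?T = "H_vertices r - {4,c',m}"
  have sub: "S \<subseteq> ?T" using z n4 nc nm unfolding zero_forcing_set_def by auto
  have c35: "c \<in> {3,5}" "c' \<in> {3,5}" using cc by auto
  have m4: "m \<noteq> 4" using m by auto
  have "\<not> zero_forcing_set (H_vertices r) (H_edges r) S"
  proof (rule not_zf_stall[OF sub, of 4])
    show "4 \<in> H_vertices r" by (simp add: VE_mem)
    show "4 \<notin> ?T" by simp
    fix u w assume u: "u \<in> ?T" and w: "w \<in> H_vertices r" "w \<notin> ?T"
      and uw: "{u,w} \<in> H_edges r"
    have wc: "w = 4 \<or> w = c' \<or> w = m" using w by auto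
    have hm: "m \<in> H_vertices r" and h4: "(4::nat) \<in> H_vertices r" and hc: "c' \<in> H_vertices r"
      using m c35 by (auto simp: VE_mem)
    show "\<exists>x\<in>H_vertices r. x \<notin> ?T \<and> x \<noteq> w \<and> {u,x} \<in> H_edges r"
    proof (cases "u = c")
      case True
      have nh: "\<not> hadj r c c'" using cc nadj35 by auto
      have "w \<noteq> c'"
      proof
        assume "w = c'"
        hence "{c,c'} \<in> H_edges r" using uw True by simp
        thus False using nh by (simp only: HE)
      qed
      hence "w = 4 \<or> w = m" using wc by auto
      thus ?thesis
      proof
        assume "w = 4"
        moreover have "{u,m} \<in> H_edges r" unfolding HE True by (rule adj_c_m[OF c35(1) m])
        ultimately show ?thesis using hm m4 by blast
      next
        assume "w = m"
        moreover have "{u,4} \<in> H_edges r" unfolding HE True by (rule adj_c_4[OF c35(1)])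
        ultimately show ?thesis using h4 m4 by blast
      qed
    next
      case False
      hence uu: "u \<in> {0,1,2} \<or> (6 \<le> u \<and> u \<le> r+5)" using u cc by (auto simp: VE_mem)
      have e4: "{u,4} \<in> H_edges r" unfolding HE by (rule adj_u_4[OF uu])
      have ec: "{u,c'} \<in> H_edges r" unfolding HE by (rule adj_u_c[OF c35(2) uu])
      show ?thesis
      proof (cases "w = 4")
        case True thus ?thesis using ec hc c35 by (intro bexI[of _ c']) auto
      next
        case False thus ?thesis using e4 h4 by (intro bexI[of _ 4]) auto
      qed
    qed
  qed
  thus False using z by blast
qed

context fixes r :: nat assumes r2: "2 \<le> r" begin

lemma posC:
  assumes sub: "{0,1,2,3} \<union> {6..r+5} \<subseteq> S" and SV: "S \<subseteq> H_vertices r"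
  shows "zero_forcing_set (H_vertices r) (H_edges r) S"
proof -
  let ?B = "zf_blue (H_vertices r) (H_edges r) S"
  have init: "\<And>x. x \<in> S \<Longrightarrow> ?B x" by (rule zf_blue.init)
  have Ua: "\<And>x. 6 \<le> x \<Longrightarrow> x \<le> r+5 \<Longrightarrow> ?B x" using sub init by auto
  have Bb: "?B 0" "?B 1" "?B 2" "?B 3" using sub init by auto
  have B4: "?B 4"
  proof (rule zf_blue.force[of 3])
    show "(3::nat) \<in> H_vertices r" "(4::nat) \<in> H_vertices r" by (auto simp: VE_mem)
    show "?B 3" by (rule Bb)
    show "{3, 4} \<in> H_edges r" by (auto simp: HE hadj_def)
    show "\<forall>x\<in>H_vertices r. {3, x} \<in> H_edges r \<and> x \<noteq> 4 \<longrightarrow> ?B x"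
    proof (intro ballI impI)
      fix x assume "x \<in> H_vertices r" "{3,x} \<in> H_edges r \<and> x \<noteq> 4"
      hence "x = 0 \<or> x = 1 \<or> x = 2 \<or> (6 \<le> x \<and> x \<le> r+5)" by (auto simp: HE hadj_def)
      thus "?B x" using Bb Ua by blast
    qed
  qed
  have B5: "?B 5"
  proof (rule zf_blue.force[of 0])
    show "(0::nat) \<in> H_vertices r" "(5::nat) \<in> H_vertices r" by (auto simp: VE_mem)
    show "?B 0" by (rule Bb)
    show "{0, 5} \<in> H_edges r" by (auto simp: HE hadj_def)
    show "\<forall>x\<in>H_vertices r. {0, x} \<in> H_edges r \<and> x \<noteq> 5 \<longrightarrow> ?B x"
    proof (intro ballI impI)
      fix x assume "x \<in> H_vertices r" "{0,x} \<in> H_edges r \<and> x \<noteq> 5"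
      hence "x = 1 \<or> x = 3 \<or> x = 4" by (auto simp: HE hadj_def)
      thus "?B x" using Bb B4 by blast
    qed
  qed
  have "?B v" if v: "v \<in> H_vertices r" for v
  proof -
    have "v = 0 \<or> v = 1 \<or> v = 2 \<or> v = 3 \<or> v = 4 \<or> v = 5 \<or> (6 \<le> v \<and> v \<le> r+5)" using v by (auto simp: VE_mem)
    thus ?thesis using Bb B4 B5 Ua by blast
  qed
  thus ?thesis unfolding zero_forcing_set_def using SV by blast
qed

end


lemma tar_conn_root:
  assumes "T0 \<in> tar_vertices V E k" "\<And>S. S \<in> tar_vertices V E k \<Longrightarrow> (tar_adj V E k)\<^sup>*\<^sup>* S T0"
  shows "tar_connected V E k"
  unfolding tar_connected_def
proof (intro conjI ballI)
  show "tar_vertices V E k \<noteq> {}" using assms(1) by blast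
  fix S T assume "S \<in> tar_vertices V E k" "T \<in> tar_vertices V E k"
  hence "(tar_adj V E k)\<^sup>*\<^sup>* S T0" "(tar_adj V E k)\<^sup>*\<^sup>* T0 T" using assms(2) tar_rt_sym by blast+
  thus "(tar_adj V E k)\<^sup>*\<^sup>* S T" by (rule rtranclp_trans)
qed

lemma card_ins_le: "finite A \<Longrightarrow> card (insert x A) \<le> Suc (card A)"
  by (simp add: card_insert_if)

lemma cardV: "card (H_vertices r) = r + 6" by (simp add: HV)
lemma finV: "finite (H_vertices r)" by (simp add: HV)

lemma card_split: "S \<subseteq> H_vertices r \<Longrightarrow> card S = card (S \<inter> {0..5}) + card (S \<inter> {6..r+5})"
proof -
  assume S: "S \<subseteq> H_vertices r"
  have e: "S = (S \<inter> {0..5}) \<union> (S \<inter> {6..r+5})" using S by (auto simp: HV)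
  have "card ((S \<inter> {0..5}) \<union> (S \<inter> {6..r+5})) = card (S \<inter> {0..5}) + card (S \<inter> {6..r+5})"
    by (rule card_Un_disjoint) auto
  thus ?thesis using e by simp
qed

lemma card_XY: "X \<subseteq> {0..5} \<Longrightarrow> Y \<subseteq> {6..r+5} \<Longrightarrow> card (X \<union> Y) = card X + card (Y::nat set)"
proof -
  assume "X \<subseteq> {0..5}" "Y \<subseteq> {6..r+5}"
  moreover hence "finite X" "finite Y" using finite_subset[OF _ finite_atLeastAtMost] by blast+
  moreover have "X \<inter> Y = {}" using calculation(1,2) by fastforce
  ultimately show ?thesis by (intro card_Un_disjoint) auto
qed

lemma card_U1: "6 \<le> u \<Longrightarrow> u \<le> r+5 \<Longrightarrow> card ({6..r+5} - {u}) = r - 1"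
  by simp

lemma U_sub: "zero_forcing_set (H_vertices r) (H_edges r) S \<Longrightarrow> 6 \<le> u \<Longrightarrow> u \<le> r+5 \<Longrightarrow> u \<notin> S
  \<Longrightarrow> {6..r+5} - {u} \<subseteq> S"
  using twinU[of r S u] by fastforce

lemma U_card: "zero_forcing_set (H_vertices r) (H_edges r) S \<Longrightarrow> r - 1 \<le> card (S \<inter> {6..r+5})"
proof -
  assume z: "zero_forcing_set (H_vertices r) (H_edges r) S"
  show ?thesis
  proof (cases "{6..r+5} \<subseteq> S")
    case True
    hence "S \<inter> {6..r+5} = {6..r+5}" by blast
    thus ?thesis by simp
  next
    case False
    then obtain u where "u \<in> {6..r+5}" "u \<notin> S" by blast
    hence u: "6 \<le> u" "u \<le> r+5" "u \<notin> S" by auto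
    hence "{6..r+5} - {u} \<subseteq> S \<inter> {6..r+5}" using U_sub[OF z u] by blast
    hence "card ({6..r+5} - {u}) \<le> card (S \<inter> {6..r+5})" by (intro card_mono) auto
    thus ?thesis using u by simp
  qed
qed

lemma struct:
  assumes z: "zero_forcing_set (H_vertices r) (H_edges r) S"
  shows "(\<exists>a c d. a \<in> {0,2} \<and> c \<in> {3,4,5} \<and> d \<in> {3,4,5} \<and> c \<noteq> d \<and> a \<in> S \<and> c \<in> S \<and> d \<in> S)
     \<or> ({0,1,2} \<subseteq> S \<and> {6..r+5} \<subseteq> S \<and> (\<exists>c\<in>{3,5}. c \<in> S))"
proof -
  obtain a where a: "a \<in> {0,2}" "a \<in> S" using twin02[OF z] by blast
  obtain c c' where cc: "(c = (3::nat) \<and> c' = 5) \<or> (c = 5 \<and> c' = (3::nat))" and c: "c \<in> S"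
    using twin35[OF z] by blast
  show ?thesis
  proof (cases "4 \<in> S")
    case True
    hence "a \<in> {0,2} \<and> c \<in> {3,4,5} \<and> (4::nat) \<in> {3,4,5} \<and> c \<noteq> 4 \<and> a \<in> S \<and> c \<in> S \<and> 4 \<in> S"
      using a c cc by auto
    thus ?thesis by blast
  next
    case n4: False
    show ?thesis
    proof (cases "c' \<in> S")
      case True
      hence "a \<in> {0,2} \<and> c \<in> {3,4,5} \<and> c' \<in> {3,4,5} \<and> c \<noteq> c' \<and> a \<in> S \<and> c \<in> S \<and> c' \<in> S"
        using a c cc by auto
      thus ?thesis by blast
    next
      case False
      have m: "m \<in> S" if "m \<in> {0,1,2} \<or> (6 \<le> m \<and> m \<le> r+5)" for m
        using negAC[OF z cc n4 False that] by blast
      have "{0,1,2} \<subseteq> S" using m by auto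
      moreover have "{6..r+5} \<subseteq> S" using m by auto
      moreover have "\<exists>c\<in>{3,5}. c \<in> S" using c cc by auto
      ultimately show ?thesis by blast
    qed
  qed
qed

lemma lower:
  assumes r2: "2 \<le> r" and z: "zero_forcing_set (H_vertices r) (H_edges r) S"
  shows "r + 2 \<le> card S"
proof -
  have SV: "S \<subseteq> H_vertices r" using z unfolding zero_forcing_set_def by blast
  have cs: "card S = card (S \<inter> {0..5}) + card (S \<inter> {6..r+5})" by (rule card_split[OF SV])
  have fin: "finite (S \<inter> {0..5})" by simp
  from struct[OF z] show ?thesis
  proof
    assume "\<exists>a c d. a \<in> {0,2} \<and> c \<in> {3,4,5} \<and> d \<in> {3,4,5} \<and> c \<noteq> d \<and> a \<in> S \<and> c \<in> S \<and> d \<in> S"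
    then obtain a c d where acd: "a \<in> {0,2}" "c \<in> {3,4,5}" "d \<in> {3,4,5}" "c \<noteq> d" "a \<in> S" "c \<in> S" "d \<in> S" by blast
    have "card {a,c,d} = 3" using acd by auto
    moreover have "card {a,c,d} \<le> card (S \<inter> {0..5})" using acd by (intro card_mono[OF fin]) auto
    ultimately have "3 \<le> card (S \<inter> {0..5})" by simp
    thus ?thesis using cs U_card[OF z] r2 by linarith
  next
    assume C: "{0,1,2} \<subseteq> S \<and> {6..r+5} \<subseteq> S \<and> (\<exists>c\<in>{3,5}. c \<in> S)"
    then obtain c where c: "c \<in> {3,5}" "c \<in> S" by blast
    have "card {0,1,2,c} = 4" using c by auto
    moreover have "card {0,1,2,c} \<le> card (S \<inter> {0..5})" using C c by (intro card_mono[OF fin]) auto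
    ultimately have "4 \<le> card (S \<inter> {0..5})" by simp
    moreover have "S \<inter> {6..r+5} = {6..r+5}" using C by blast
    ultimately show ?thesis using cs by simp
  qed
qed

lemma r3_struct:
  assumes z: "zero_forcing_set (H_vertices r) (H_edges r) S" and cs: "card S \<le> r + 3"
  shows "\<exists>a c d. a \<in> {0,2} \<and> c \<in> {3,4,5} \<and> d \<in> {3,4,5} \<and> c \<noteq> d \<and> a \<in> S \<and> c \<in> S \<and> d \<in> S"
proof -
  have SV: "S \<subseteq> H_vertices r" using z unfolding zero_forcing_set_def by blast
  have cs2: "card S = card (S \<inter> {0..5}) + card (S \<inter> {6..r+5})" by (rule card_split[OF SV])
  have fin: "finite (S \<inter> {0..5})" by simp
  show ?thesis
  proof (rule ccontr)
    assume na: "\<not> ?thesis"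
    hence C: "{0,1,2} \<subseteq> S \<and> {6..r+5} \<subseteq> S \<and> (\<exists>c\<in>{3,5}. c \<in> S)" using struct[OF z] by blast
    then obtain c where c: "c \<in> {3,5}" "c \<in> S" by blast
    have "card {0,1,2,c} = 4" using c by auto
    moreover have "card {0,1,2,c} \<le> card (S \<inter> {0..5})" using C c by (intro card_mono[OF fin]) auto
    ultimately have "4 \<le> card (S \<inter> {0..5})" by simp
    moreover have "S \<inter> {6..r+5} = {6..r+5}" using C by blast
    ultimately show False using cs cs2 by simp
  qed
qed


lemma card3: "card {x,y,z::nat} \<le> 3"
  using card_ins_le[of "{y,z}" x] card_ins_le[of "{z}" y] by simp
lemma card4: "card {w,x,y,z::nat} \<le> 4"
  using card_ins_le[of "{x,y,z}" w] card3[of x y z] by simp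

context fixes r :: nat assumes r2: "2 \<le> r" begin

lemma conn_sub:
  assumes "zero_forcing_set (H_vertices r) (H_edges r) X" "X \<subseteq> Y" "Y \<subseteq> H_vertices r" "card Y \<le> k"
  shows "(tar_adj (H_vertices r) (H_edges r) k)\<^sup>*\<^sup>* X Y" "(tar_adj (H_vertices r) (H_edges r) k)\<^sup>*\<^sup>* Y X"
  using tar_conn_sub[OF assms(1-3) finV assms(4)] by auto

lemma posA_set:
  assumes "a \<in> {0,2}" "c \<in> {3,4,5}" "d \<in> {3,4,5}" "c \<noteq> d" "6 \<le> u" "u \<le> r+5"
    "X \<subseteq> {0..5}" "{a,c,d} \<subseteq> X" "M = {6..r+5} - {u} \<or> M = {6..r+5}"
  shows "zero_forcing_set (H_vertices r) (H_edges r) (X \<union> M)"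
proof (rule posA[OF r2 assms(1-6)])
  show "{a, c, d} \<union> ({6..r + 5} - {u}) \<subseteq> X \<union> M" using assms(8,9) by auto
  show "X \<union> M \<subseteq> H_vertices r" using assms(7,9) by (auto simp: HV)
qed

lemma cardW: "card ({6..r+5} - {6}) = r - 1"
proof -
  have "{6..r+5} - {6} = {7..r+5}" by auto
  thus ?thesis by simp
qed

lemma card_XW: "X \<subseteq> {0..5} \<Longrightarrow> card (X \<union> ({6..r+5} - {6})) = card X + (r - 1)"
  using card_XY[of X "{6..r+5} - {6}" r] cardW by auto

lemma card_XU: "X \<subseteq> {0..5} \<Longrightarrow> card (X \<union> {6..r+5}) = card X + r"
  using card_XY[of X "{6..r+5}" r] by auto

definition "T0 = {0,3,4} \<union> ({6..r+5} - {6})"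

lemma T0_zf: "zero_forcing_set (H_vertices r) (H_edges r) T0"
  unfolding T0_def by (rule posA_set[of 0 3 4 6]) (use r2 in auto)

lemma T0_card: "card T0 = r + 2"
  unfolding T0_def using card_XW[of "{0,3,4}"] r2 by simp

lemma T0_tv: "r + 2 \<le> k \<Longrightarrow> T0 \<in> tar_vertices (H_vertices r) (H_edges r) k"
  unfolding tar_vertices_def using T0_zf T0_card by simp

lemma conn3: "tar_connected (H_vertices r) (H_edges r) (r+3)"
proof (rule tar_conn_root[OF T0_tv])
  let ?R = "(tar_adj (H_vertices r) (H_edges r) (r+3))\<^sup>*\<^sup>*"
  let ?U = "{6..r+5}" let ?W = "{6..r+5} - {6}"
  fix S assume "S \<in> tar_vertices (H_vertices r) (H_edges r) (r+3)"
  hence z: "zero_forcing_set (H_vertices r) (H_edges r) S" and cS: "card S \<le> r+3"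
    unfolding tar_vertices_def by auto
  have SV: "S \<subseteq> H_vertices r" using z unfolding zero_forcing_set_def by blast
  obtain a c d where acd: "a \<in> {0,2}" "c \<in> {3,4,5}" "d \<in> {3,4,5}" "c \<noteq> d" "a \<in> S" "c \<in> S" "d \<in> S"
    using r3_struct[OF z cS] by blast
  obtain u where u: "6 \<le> u" "u \<le> r+5" "?U - {u} \<subseteq> S"
  proof (cases "?U \<subseteq> S")
    case True thus ?thesis using that[of 6] r2 by auto
  next
    case False
    then obtain u where "u \<in> ?U" "u \<notin> S" by blast
    thus ?thesis using that[of u] U_sub[OF z] by auto
  qed
  have X1: "{a,c,d} \<subseteq> {0..5}" using acd by auto
  have X0: "{0,a,c,d} \<subseteq> {0..5}" using acd by auto
  have X2: "{0,c,d} \<subseteq> {0..5}" using acd by auto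
  have c3: "card {a,c,d} \<le> 3" by (rule card3)
  define S1 where "S1 = {a,c,d} \<union> (?U - {u})"
  define S1' where "S1' = {a,c,d} \<union> ?U"
  define S2 where "S2 = {a,c,d} \<union> ?W"
  define S3 where "S3 = {0,a,c,d} \<union> ?W"
  define S4 where "S4 = {0,c,d} \<union> ?W"
  define S5 where "S5 = {0,3,4,5} \<union> ?W"
  have z1: "zero_forcing_set (H_vertices r) (H_edges r) S1"
    unfolding S1_def by (rule posA_set[OF acd(1-4) u(1,2)]) (use acd in auto)
  have z2: "zero_forcing_set (H_vertices r) (H_edges r) S2"
    unfolding S2_def by (rule posA_set[OF acd(1-4), of 6]) (use r2 acd in auto)
  have z4: "zero_forcing_set (H_vertices r) (H_edges r) S4"
    unfolding S4_def by (rule posA_set[of 0 c d 6]) (use r2 acd in auto)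
  have V1': "S1' \<subseteq> H_vertices r" unfolding S1'_def using acd by (auto simp: HV)
  have V3: "S3 \<subseteq> H_vertices r" unfolding S3_def using acd by (auto simp: HV)
  have V5: "S5 \<subseteq> H_vertices r" unfolding S5_def by (auto simp: HV)
  have cS1': "card S1' \<le> r+3" unfolding S1'_def using card_XU[OF X1] c3 by simp
  have cS3: "card S3 \<le> r+3" unfolding S3_def using card_XW[OF X0] card4[of 0 a c d] r2 by simp
  have cS5: "card S5 \<le> r+3" unfolding S5_def using card_XW[of "{0,3,4,5}"] r2 by simp
  have p1: "?R S S1" by (rule conn_sub(2)[OF z1 _ SV cS]) (use acd u in \<open>auto simp: S1_def\<close>)
  have p2: "?R S1 S1'" by (rule conn_sub(1)[OF z1 _ V1' cS1']) (auto simp: S1_def S1'_def)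
  have p3: "?R S1' S2" by (rule conn_sub(2)[OF z2 _ V1' cS1']) (auto simp: S2_def S1'_def)
  have p4: "?R S2 S3" by (rule conn_sub(1)[OF z2 _ V3 cS3]) (auto simp: S2_def S3_def)
  have p5: "?R S3 S4" by (rule conn_sub(2)[OF z4 _ V3 cS3]) (auto simp: S4_def S3_def)
  have p6: "?R S4 S5" by (rule conn_sub(1)[OF z4 _ V5 cS5]) (use acd in \<open>auto simp: S4_def S5_def\<close>)
  have p7: "?R S5 T0" by (rule conn_sub(2)[OF T0_zf _ V5 cS5]) (auto simp: T0_def S5_def)
  show "?R S T0"
    using p1 p2 p3 p4 p5 p6 p7 by (meson rtranclp_trans)
qed (simp)

end


context fixes r :: nat assumes r2: "2 \<le> r" begin

lemma T0_sub: "T0 r \<subseteq> H_vertices r" "1 \<notin> T0 r" "0 \<in> T0 r" by (auto simp: T0_def[OF r2] HV)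

lemma V_zf: "zero_forcing_set (H_vertices r) (H_edges r) (H_vertices r)"
  by (rule zf_superset[OF T0_zf[OF r2] T0_sub(1)]) simp

lemma tv_elim: "S \<in> tar_vertices (H_vertices r) (H_edges r) k \<Longrightarrow>
   zero_forcing_set (H_vertices r) (H_edges r) S \<and> card S \<le> k \<and> S \<subseteq> H_vertices r"
  unfolding tar_vertices_def zero_forcing_set_def by auto

lemma conn6: "tar_connected (H_vertices r) (H_edges r) (r+6)"
proof (rule tar_conn_root[of "H_vertices r"])
  show "H_vertices r \<in> tar_vertices (H_vertices r) (H_edges r) (r+6)"
    unfolding tar_vertices_def using V_zf cardV by simp
  fix S assume "S \<in> tar_vertices (H_vertices r) (H_edges r) (r+6)"
  hence z: "zero_forcing_set (H_vertices r) (H_edges r) S" and SV: "S \<subseteq> H_vertices r" using tv_elim by auto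
  show "(tar_adj (H_vertices r) (H_edges r) (r+6))\<^sup>*\<^sup>* S (H_vertices r)"
    by (rule conn_sub(1)[OF r2 z SV order_refl]) (simp add: cardV)
qed

lemma conn5: "tar_connected (H_vertices r) (H_edges r) (r+5)"
proof -
  let ?V = "H_vertices r"
  let ?R = "(tar_adj (H_vertices r) (H_edges r) (r+5))\<^sup>*\<^sup>*"
  define T1 where "T1 = ?V - {1}"
  have T1V: "T1 \<subseteq> ?V" unfolding T1_def by auto
  have zT1: "zero_forcing_set (H_vertices r) (H_edges r) T1"
    by (rule zf_superset[OF T0_zf[OF r2]]) (use T0_sub in \<open>auto simp: T1_def\<close>)
  have cT1: "card T1 = r + 5" unfolding T1_def using cardV[of r] finV[of r]
    by (simp add: card_Diff_singleton HV)
  show ?thesis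
  proof (rule tar_conn_root[of T1])
    show "T1 \<in> tar_vertices (H_vertices r) (H_edges r) (r+5)"
      unfolding tar_vertices_def using zT1 cT1 by simp
    fix S assume "S \<in> tar_vertices (H_vertices r) (H_edges r) (r+5)"
    hence z: "zero_forcing_set (H_vertices r) (H_edges r) S" and SV: "S \<subseteq> ?V" and cS: "card S \<le> r+5"
      using tv_elim by auto
    show "?R S T1"
    proof (cases "1 \<in> S")
      case False
      hence "S \<subseteq> T1" using SV unfolding T1_def by auto
      thus ?thesis by (rule conn_sub(1)[OF r2 z _ T1V]) (simp add: cT1)
    next
      case True
      obtain v where v: "v \<in> ?V" "v \<notin> S"
      proof (rule ccontr)
        assume "\<not> thesis"
        hence "?V \<subseteq> S" using that by blast
        hence "card ?V \<le> card S" using finite_subset[OF SV finV] by (intro card_mono) auto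
        thus False using cS cardV[of r] by simp
      qed
      have v1: "v \<noteq> 1" using v True by auto
      have vle: "v \<le> r+5" using v by (simp add: HV)
      define Q where "Q = ?V - {1,v}"
      define a where "a = (if v = 0 then 2 else (0::nat))"
      define c where "c = (if v = 3 then 4 else (3::nat))"
      define d where "d = (if v = 5 then 4 else (5::nat))"
      define u where "u = (if 6 \<le> v then v else (6::nat))"
      have zQ: "zero_forcing_set (H_vertices r) (H_edges r) Q"
      proof (rule posA[OF r2, of a c d u])
        show "a \<in> {0,2}" "c \<in> {3,4,5}" "d \<in> {3,4,5}" "c \<noteq> d" unfolding a_def c_def d_def by auto
        show "6 \<le> u" "u \<le> r+5" unfolding u_def using vle r2 by auto
        show "Q \<subseteq> H_vertices r" unfolding Q_def by auto
        show "{a, c, d} \<union> ({6..r + 5} - {u}) \<subseteq> Q"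
          unfolding Q_def a_def c_def d_def u_def using vle by (auto simp: HV)
      qed
      have Vv: "?V - {v} \<subseteq> ?V" by auto
      have cVv: "card (?V - {v}) \<le> r + 5" using v cardV[of r] finV[of r] by (simp add: card_Diff_singleton)
      have p1: "?R S (?V - {v})" by (rule conn_sub(1)[OF r2 z _ Vv cVv]) (use SV v in auto)
      have p2: "?R (?V - {v}) Q" by (rule conn_sub(2)[OF r2 zQ _ Vv cVv]) (auto simp: Q_def)
      have p3: "?R Q T1"
      proof (rule conn_sub(1)[OF r2 zQ _ T1V])
        show "Q \<subseteq> T1" by (auto simp: Q_def T1_def)
        show "card T1 \<le> r + 5" using cT1 by simp
      qed
      show ?thesis using p1 p2 p3 by (meson rtranclp_trans)
    qed
  qed
qed

lemma not_conn4: "\<not> tar_connected (H_vertices r) (H_edges r) (r+4)"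
proof
  assume conn: "tar_connected (H_vertices r) (H_edges r) (r+4)"
  define Ts where "Ts = {0,1,2,3} \<union> {6..r+5}"
  have zT: "zero_forcing_set (H_vertices r) (H_edges r) Ts"
    by (rule posC[OF r2]) (auto simp: Ts_def HV)
  have cT: "card Ts = r + 4" unfolding Ts_def using card_XU[OF r2, of "{0,1,2,3}"] by simp
  have fT: "finite Ts" unfolding Ts_def by simp
  have Tv: "Ts \<in> tar_vertices (H_vertices r) (H_edges r) (r+4)" unfolding tar_vertices_def using zT cT by simp
  have T0v: "T0 r \<in> tar_vertices (H_vertices r) (H_edges r) (r+4)" by (rule T0_tv[OF r2]) simp
  have ne: "Ts \<noteq> T0 r" using T0_sub(2) unfolding Ts_def by auto
  have "(tar_adj (H_vertices r) (H_edges r) (r+4))\<^sup>*\<^sup>* Ts (T0 r)" using conn Tv T0v unfolding tar_connected_def by blast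
  then obtain y where adj: "tar_adj (H_vertices r) (H_edges r) (r+4) Ts y"
    using ne by (metis converse_rtranclpE)
  hence yv: "y \<in> tar_vertices (H_vertices r) (H_edges r) (r+4)" and sd: "card ((Ts - y) \<union> (y - Ts)) = 1"
    unfolding tar_adj_def by auto
  have zy: "zero_forcing_set (H_vertices r) (H_edges r) y" and cy: "card y \<le> r + 4" using tv_elim[OF yv] by auto
  from symdiff1_cases[OF sd] show False
  proof
    assume "\<exists>x\<in>Ts. y = Ts - {x}"
    then obtain x where x: "x \<in> Ts" "y = Ts - {x}" by blast
    have n4: "4 \<notin> y" and n5: "5 \<notin> y" and nx: "x \<notin> y" using x unfolding Ts_def by auto
    show False
    proof (cases "x = 3")
      case True
      thus False using twin35[OF zy] n5 nx by auto
    next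
      case False
      hence "x \<in> {0,1,2} \<or> (6 \<le> x \<and> x \<le> r+5)" using x unfolding Ts_def by auto
      thus False using negAC[OF zy _ n4 n5 _ nx, of 3] by auto
    qed
  next
    assume "\<exists>x. x \<notin> Ts \<and> y = insert x Ts"
    then obtain x where "x \<notin> Ts" "y = insert x Ts" by blast
    hence "card y = r + 5" using fT cT by simp
    thus False using cy by simp
  qed
qed

lemma no_small: "k \<le> r + 2 \<Longrightarrow> \<not> tar_connected (H_vertices r) (H_edges r) k"
proof
  assume k: "k \<le> r + 2" and conn: "tar_connected (H_vertices r) (H_edges r) k"
  obtain S where "S \<in> tar_vertices (H_vertices r) (H_edges r) k" using conn unfolding tar_connected_def by blast
  hence "r + 2 \<le> k" using tv_elim lower[OF r2] by fastforce
  hence kk: "k = r + 2" using k by simp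
  define T' where "T' = {2,3,4} \<union> ({6..r+5} - {6})"
  have zT': "zero_forcing_set (H_vertices r) (H_edges r) T'"
    unfolding T'_def by (rule posA_set[OF r2, of 2 3 4 6]) (use r2 in auto)
  have cT': "card T' = r + 2" unfolding T'_def using card_XW[OF r2, of "{2,3,4}"] r2 by simp
  have T'v: "T' \<in> tar_vertices (H_vertices r) (H_edges r) k" unfolding tar_vertices_def using zT' cT' kk by simp
  have T0v: "T0 r \<in> tar_vertices (H_vertices r) (H_edges r) k" by (rule T0_tv[OF r2]) (simp add: kk)
  have ne: "T0 r \<noteq> T'" using T0_sub(3) unfolding T'_def by auto
  have "(tar_adj (H_vertices r) (H_edges r) k)\<^sup>*\<^sup>* (T0 r) T'" using conn T'v T0v unfolding tar_connected_def by blast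
  then obtain y where adj: "tar_adj (H_vertices r) (H_edges r) k (T0 r) y"
    using ne by (metis converse_rtranclpE)
  hence yv: "y \<in> tar_vertices (H_vertices r) (H_edges r) k" and sd: "card ((T0 r - y) \<union> (y - T0 r)) = 1"
    unfolding tar_adj_def by auto
  have zy: "zero_forcing_set (H_vertices r) (H_edges r) y" and cy: "card y \<le> k" and yV: "y \<subseteq> H_vertices r"
    using tv_elim[OF yv] by auto
  have "card y = r + 2" using cy kk lower[OF r2 zy] by simp
  moreover have "finite y" using finite_subset[OF yV finV] .
  moreover have "finite (T0 r)" using finite_subset[OF T0_sub(1) finV] .
  ultimately show False using symdiff1_card[OF _ _ sd] T0_card[OF r2] by simp
qed

end

theorem proposition3p9:
  fixes r :: nat
  assumes "r \<ge> 2"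
  shows "zf_number (H_vertices r) (H_edges r) = r + 2
       \<and> z0_lower (H_vertices r) (H_edges r) = r + 3
       \<and> z0 (H_vertices r) (H_edges r) = r + 5"
proof (intro conjI)
  have r2: "2 \<le> r" using assms by simp
  show "zf_number (H_vertices r) (H_edges r) = r + 2"
    unfolding zf_number_def
  proof (rule Least_equality)
    show "\<exists>S. zero_forcing_set (H_vertices r) (H_edges r) S \<and> card S = r + 2"
      using T0_zf[OF r2] T0_card[OF r2] by blast
    fix k assume "\<exists>S. zero_forcing_set (H_vertices r) (H_edges r) S \<and> card S = k"
    thus "r + 2 \<le> k" using lower[OF r2] by blast
  qed
  show "z0_lower (H_vertices r) (H_edges r) = r + 3"
    unfolding z0_lower_def
  proof (rule Least_equality)
    show "tar_connected (H_vertices r) (H_edges r) (r + 3)" by (rule conn3[OF r2])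
    fix k assume "tar_connected (H_vertices r) (H_edges r) k"
    thus "r + 3 \<le> k" using no_small[OF r2, of k] by linarith
  qed
  show "z0 (H_vertices r) (H_edges r) = r + 5"
    unfolding z0_def
  proof (rule Least_equality)
    show "\<forall>i. r + 5 \<le> i \<and> i \<le> card (H_vertices r) \<longrightarrow> tar_connected (H_vertices r) (H_edges r) i"
    proof (intro allI impI)
      fix i assume "r + 5 \<le> i \<and> i \<le> card (H_vertices r)"
      hence "i = r + 5 \<or> i = r + 6" using cardV[of r] by auto
      thus "tar_connected (H_vertices r) (H_edges r) i" using conn5[OF r2] conn6[OF r2] by auto
    qed
    fix k assume k: "\<forall>i. k \<le> i \<and> i \<le> card (H_vertices r) \<longrightarrow> tar_connected (H_vertices r) (H_edges r) i"
    show "r + 5 \<le> k"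
    proof (rule ccontr)
      assume "\<not> r + 5 \<le> k"
      hence "k \<le> r + 4 \<and> r + 4 \<le> card (H_vertices r)" using cardV[of r] by simp
      thus False using k not_conn4[OF r2] by blast
    qed
  qed
qed


end
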